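(* Let $N$ and $r$ be relatively prime positive integers greater than $1$, and let $\bar{r}$ be an integer such that $r\bar{r}\equiv 1 \pmod N$. Let $\Gamma$ be the $4$-valent graph on $\mathbb{Z}/N\mathbb{Z}$ in which each vertex $x$ is connected to the vertices $r(x+1)$, $r(x-1)$, $\bar{r}x+1$ and $\bar{r}x-1$. Then there exists a constant $c>0$, depending only on $r$, such that every nontrivial eigenvalue $\lambda$ of the adjacency matrix of $\Gamma$ either satisfies $$|\lambda| \le 4 - \frac{c}{(\log N)^2},$$ or is of the form $\lambda = 4\cos(2\pi k/N)$ for some $k$ satisfying $rk\equiv k \pmod N$. In particular, if $N$ is a power of $2$ and $\gcd(r-1,N)=2$, then $\Gamma$ is a bipartite graph for which all eigenvalues not equal to $\pm 4$ satisfy $|\lambda| \le 4 - \frac{c}{(\log N)^2}$.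
   Context: The edge relation is symmetric (if $y=r(x\pm1)$ then $x=\bar{r}y\mp 1$), so $\Gamma$ is an undirected $4$-regular graph (edges counted with multiplicity). Its adjacency operator acts on functions $f:\mathbb{Z}/N\mathbb{Z}\to\mathbb{C}$ by $(Af)(x)=\sum_{y\sim x} f(y)$, the sum running over the four neighbors of $x$ listed above, with multiplicity. The trivial eigenvalue is $4$, attained by the constant function; "nontrivial eigenvalues" are the eigenvalues of $A$ restricted to the orthogonal complement of the constant functions. *)

theory Defs
  imports "HOL-Analysis.Analysis" "HOL-Number_Theory.Number_Theory"
begin

text \<open>Vertices of the graph are the residues 0,...,N-1 (representing Z/NZ).
  The four neighbours of x, listed with multiplicity.\<close>
definition nbrs :: "int \<Rightarrow> int \<Rightarrow> int \<Rightarrow> int \<Rightarrow> int list" where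
  "nbrs N r rb x = [(r * (x + 1)) mod N, (r * (x - 1)) mod N, (rb * x + 1) mod N, (rb * x - 1) mod N]"

definition adj_op :: "int \<Rightarrow> int \<Rightarrow> int \<Rightarrow> (int \<Rightarrow> complex) \<Rightarrow> int \<Rightarrow> complex" where
  "adj_op N r rb f x = (\<Sum>y\<leftarrow>nbrs N r rb x. f y)"

definition is_eigenvalue :: "int \<Rightarrow> int \<Rightarrow> int \<Rightarrow> complex \<Rightarrow> bool" where
  "is_eigenvalue N r rb lam \<longleftrightarrow>
     (\<exists>f. (\<exists>x\<in>{0..<N}. f x \<noteq> 0) \<and> (\<forall>x\<in>{0..<N}. adj_op N r rb f x = lam * f x))"

text \<open>lam is a nontrivial eigenvalue: an eigenvalue of the operator restricted to the
  orthogonal complement of the constant functions.\<close>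
definition is_nontrivial_eigenvalue :: "int \<Rightarrow> int \<Rightarrow> int \<Rightarrow> complex \<Rightarrow> bool" where
  "is_nontrivial_eigenvalue N r rb lam \<longleftrightarrow>
     (\<exists>f. (\<exists>x\<in>{0..<N}. f x \<noteq> 0) \<and> (\<Sum>x\<in>{0..<N}. f x) = 0 \<and>
          (\<forall>x\<in>{0..<N}. adj_op N r rb f x = lam * f x))"

definition is_bipartite :: "int \<Rightarrow> int \<Rightarrow> int \<Rightarrow> bool" where
  "is_bipartite N r rb \<longleftrightarrow>
     (\<exists>S. S \<subseteq> {0..<N} \<and> (\<forall>x\<in>{0..<N}. \<forall>y\<in>set (nbrs N r rb x). (x \<in> S \<longleftrightarrow> y \<notin> S)))"

end

theory Submission
  imports Defs "HOL-Library.Real_Mod"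
begin


lemma final_arith:
  fixes S M g D P E \<delta> :: real
  assumes S: "S > 0" and M: "M \<ge> 1" and g: "0 < g" "g \<le> 2" and D: "D \<ge> 0" and P: "P \<ge> 0"
    and A: "2*D + 2*P \<le> \<delta>*S"
    and C: "E \<le> P + (g/(8*M))*S + D/(g/(8*M))"
    and Dd: "S \<le> (2/g)*M*E + 2*M*M*D"
  shows "g^2/64/M^2 \<le> \<delta>"
proof (rule ccontr)
  assume "\<not> ?thesis"
  then have lt: "\<delta> < g^2/64/M^2" by simp
  define u where "u = \<delta>*M^2"
  have Mp: "M > 0" using M by simp
  have u: "u < g^2/64" using lt Mp unfolding u_def by (simp add: field_simps)
  have dS: "\<delta>*S \<ge> 0" using A D P by linarith
  then have d0: "\<delta> \<ge> 0" using S by (simp add: zero_le_mult_iff)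
  have u0: "u \<ge> 0" using d0 unfolding u_def by simp
  have PD: "P \<le> \<delta>*S/2" "D \<le> \<delta>*S/2" using A D P by linarith+
  have C': "E \<le> \<delta>*S/2 + (g/(8*M))*S + D*(8*M/g)" using C PD by simp
  have e1: "(2/g)*M*E \<le> (2/g)*M*(\<delta>*S/2 + (g/(8*M))*S + D*(8*M/g))"
    using C' g Mp by (intro mult_left_mono) auto
  have e1': "(2/g)*M*(\<delta>*S/2 + (g/(8*M))*S + D*(8*M/g)) = M*\<delta>*S/g + S/4 + 16*M^2*D/g^2"
    using g Mp by (simp add: field_simps power2_eq_square)
  have e2: "16*M^2*D/g^2 \<le> 8*u*S/g^2"
  proof -
    have "(16*M^2)*D \<le> (16*M^2)*(\<delta>*S/2)" using PD(2) by (intro mult_left_mono) auto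
    then have "16*M^2*D \<le> 8*u*S" unfolding u_def by (simp add: algebra_simps)
    then show ?thesis using g by (simp add: divide_right_mono)
  qed
  have e3: "8*u*S/g^2 \<le> S/8"
  proof -
    have "8*u*S \<le> 8*(g^2/64)*S" using u S by (intro mult_right_mono) auto
    then show ?thesis using g by (simp add: field_simps)
  qed
  have e4: "M*\<delta>*S/g \<le> S/32"
  proof -
    have MM: "M \<le> M*M" using M by (simp add: mult_le_cancel_left1)
    have "M*(\<delta>*S) \<le> (M*M)*(\<delta>*S)" using MM dS by (intro mult_right_mono) auto
    then have "M*\<delta>*S \<le> M*M*\<delta>*S" by (simp add: mult.assoc)
    also have "\<dots> = u*S" unfolding u_def by (simp add: power2_eq_square)
    also have "\<dots> \<le> (g^2/64)*S" using u S by (intro mult_right_mono) auto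
    finally have "M*\<delta>*S \<le> (g^2/64)*S" .
    then have "M*\<delta>*S/g \<le> (g^2/64)*S/g" using g by (intro divide_right_mono) auto
    also have "\<dots> = g*S/64" using g by (simp add: power2_eq_square)
    also have "\<dots> \<le> 2*S/64" using g S by (intro divide_right_mono mult_right_mono) auto
    finally show ?thesis by simp
  qed
  have e5: "2*M*M*D \<le> S/16"
  proof -
    have "(2*M*M)*D \<le> (2*M*M)*(\<delta>*S/2)" using PD(2) Mp by (intro mult_left_mono) auto
    then have "2*M*M*D \<le> M*M*(\<delta>*S)" by (simp add: algebra_simps)
    also have "\<dots> = u*S" unfolding u_def by (simp add: power2_eq_square)
    also have "\<dots> \<le> (g^2/64)*S" using u S by (intro mult_right_mono) auto
    also have "\<dots> \<le> (4/64)*S"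
    proof -
      have "g^2 \<le> 2^2" using g by (intro power_mono) auto
      then show ?thesis using S by (intro mult_right_mono) auto
    qed
    finally show ?thesis by simp
  qed
  have f1: "S \<le> (2/g)*M*(\<delta>*S/2 + (g/(8*M))*S + D*(8*M/g)) + 2*M*M*D" using Dd e1 by (rule order_trans[OF _ add_right_mono])
  have f2: "S \<le> (M*\<delta>*S/g + S/4 + 16*M^2*D/g^2) + 2*M*M*D" using f1 unfolding e1' .
  have "S \<le> S/32 + S/4 + S/8 + S/16" using f2 e2 e3 e4 e5 by linarith
  then show False using S by linarith
qed

lemma pw_ineq:
  fixes g x y t :: real
  assumes "0 \<le> g" "g \<le> 2" "0 \<le> x" "0 \<le> y" "t > 0"
  shows "g*x^2 \<le> g*y*x + t*x^2 + (x-y)^2/t"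
proof -
  have a: "g*x*(x-y) \<le> g*x*\<bar>x-y\<bar>" using assms by (intro mult_left_mono) auto
  have b: "g*x*\<bar>x-y\<bar> \<le> 2*x*\<bar>x-y\<bar>" using assms by (intro mult_right_mono) auto
  have "0 \<le> (t*x - \<bar>x-y\<bar>)^2" by simp
  then have "2*t*x*\<bar>x-y\<bar> \<le> t^2*x^2 + (x-y)^2" by (simp add: power2_diff power_mult_distrib)
  then have "2*t*x*\<bar>x-y\<bar> / t \<le> (t^2*x^2 + (x-y)^2) / t" using assms by (intro divide_right_mono) auto
  then have c: "2*x*\<bar>x-y\<bar> \<le> t*x^2 + (x-y)^2/t" using assms by (simp add: field_simps power2_eq_square)
  have "g*x^2 = g*y*x + g*x*(x-y)" by (simp add: algebra_simps power2_eq_square)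
  then show ?thesis using a b c by linarith
qed

lemma sq2_ineq: fixes x y :: real shows "x^2 \<le> 2*y^2 + 2*(x-y)^2"
proof -
  have "0 \<le> (x - 2*y)^2" by simp
  then show ?thesis by (simp add: power2_diff power_mult_distrib algebra_simps)
qed



definition ee :: "int \<Rightarrow> int \<Rightarrow> complex" where
  "ee N m = cis (2 * pi * of_int m / of_int N)"

definition FT :: "int \<Rightarrow> (int \<Rightarrow> complex) \<Rightarrow> int \<Rightarrow> complex" where
  "FT N f k = (\<Sum>x\<in>{0..<N}. f x * ee N (-(k*x)))"

definition bt :: "int \<Rightarrow> int \<Rightarrow> complex" where
  "bt N k = ee N k + ee N (-k)"

lemma ee_dvd:
  assumes "N \<noteq> 0" "N dvd (a - b)" shows "ee N a = ee N b"
proof -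
  obtain q where q: "a = b + N * q" using assms(2) by (metis add.commute diff_add_cancel dvd_def)
  have "2 * pi * of_int a / of_int N = 2 * pi * of_int b / of_int N + 2 * pi * of_int q"
    using assms(1) by (simp add: q field_simps)
  then have "ee N a = cis (2 * pi * of_int b / of_int N) * cis (2 * pi * of_int q)"
    by (simp add: ee_def cis_mult[symmetric])
  also have "cis (2 * pi * of_int q) = 1" by (rule cis_multiple_2pi) simp
  finally show ?thesis by (simp add: ee_def)
qed

lemma ee_mod: "N \<noteq> 0 \<Longrightarrow> ee N (a mod N) = ee N a"
  by (rule ee_dvd) (auto simp: mod_eq_dvd_iff[symmetric])

lemma ee_add: "ee N (a + b) = ee N a * ee N b"
  by (simp add: ee_def cis_mult add_divide_distrib ring_distribs)

lemma ee_zero[simp]: "ee N 0 = 1" by (simp add: ee_def)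

lemma norm_ee[simp]: "cmod (ee N a) = 1" by (simp add: ee_def)

lemma bt_real: "bt N k = complex_of_real (2 * cos (2 * pi * of_int k / of_int N))"
  by (simp add: bt_def ee_def complex_eq_iff cis.sel)

lemma norm_bt: "cmod (bt N k) = 2 * \<bar>cos (2 * pi * of_int k / of_int N)\<bar>"
  by (simp add: bt_real)

lemma reindex_aff:
  fixes h :: "int \<Rightarrow> 'a::comm_monoid_add"
  assumes N: "N > 0" and cp: "coprime a N" and per: "\<And>x. h (x mod N) = h x"
  shows "(\<Sum>x\<in>{0..<N}. h (a*x+b)) = (\<Sum>x\<in>{0..<N}. h x)"
proof -
  let ?g = "\<lambda>x. (a*x+b) mod N"
  have inj: "inj_on ?g {0..<N}"
  proof (rule inj_onI)
    fix x y assume xy: "x \<in> {0..<N}" "y \<in> {0..<N}" "?g x = ?g y"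
    then have "[a*x+b = a*y+b] (mod N)" by (simp add: cong_def)
    then have "[a*x = a*y] (mod N)" by (simp add: cong_add_rcancel)
    then have "[x = y] (mod N)" using cong_mult_lcancel cp by blast
    then show "x = y" using xy by (simp add: cong_def)
  qed
  have img: "?g ` {0..<N} = {0..<N}"
    by (rule endo_inj_surj) (use N inj in auto)
  have "(\<Sum>x\<in>{0..<N}. h (a*x+b)) = (\<Sum>x\<in>{0..<N}. h (?g x))" using per by simp
  also have "\<dots> = sum h (?g ` {0..<N})" by (simp add: sum.reindex[OF inj])
  also have "\<dots> = sum h {0..<N}" using img by simp
  finally show ?thesis .
qed

lemma reindex_mul:
  fixes h :: "int \<Rightarrow> 'a::comm_monoid_add"
  assumes N: "N > 0" and cp: "coprime a N" and per: "\<And>x. h (x mod N) = h x"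
  shows "(\<Sum>x\<in>{0..<N}. h (a*x)) = (\<Sum>x\<in>{0..<N}. h x)"
  using reindex_aff[where h=h and b=0 and N=N and a=a, OF assms] by simp

lemma geo_zero:
  assumes N: "N > 0" and nd: "\<not> N dvd m"
  shows "(\<Sum>k\<in>{0..<N}. ee N (k*m)) = 0"
proof -
  let ?T = "\<Sum>k\<in>{0..<N}. ee N (k*m)"
  have "ee N m * ?T = (\<Sum>k\<in>{0..<N}. ee N ((1*k+1)*m))"
    by (simp add: sum_distrib_left ee_add[symmetric] algebra_simps)
  also have "\<dots> = ?T"
    by (rule reindex_aff[where h="\<lambda>k. ee N (k*m)"]) (use N in \<open>auto intro!: ee_dvd simp: mod_eq_dvd_iff[symmetric] mod_mult_left_eq\<close>)
  finally have "(ee N m - 1) * ?T = 0" by (simp add: algebra_simps)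
  moreover have "ee N m \<noteq> 1"
  proof
    assume "ee N m = 1"
    then have "cis (2 * pi * of_int m / of_int N) = 1" by (simp add: ee_def)
    then obtain q :: int where "2 * pi * of_int m / of_int N = 2 * pi * of_int q" 
      using cis_eq_1_iff by (metis mult.commute)
    then have "m = N * q" using N by (simp add: field_simps) (metis of_int_eq_iff of_int_mult)
    then show False using nd by simp
  qed
  ultimately show ?thesis by simp
qed


locale G =
  fixes N r rb :: int
  assumes N1: "N > 1" and r1: "r > 1" and cop: "coprime N r" and inv: "[r*rb = 1] (mod N)"
begin

lemma Npos: "N > 0" using N1 by simp
lemma Nne: "N \<noteq> 0" using N1 by simp

lemma copr: "coprime r N" using cop by (simp add: coprime_commute)

lemma dvdr: "N dvd (r*rb - 1)" using inv by (simp add: cong_iff_dvd_diff)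

lemma coprb: "coprime rb N"
proof -
  have "coprime (r*rb) N"
    using inv cong_imp_coprime[of 1 "r*rb" N] cong_sym by auto
  then show ?thesis by simp
qed

lemma FT_cong: "[k = k'] (mod N) \<Longrightarrow> FT N f k = FT N f k'"
  unfolding FT_def
proof (intro sum.cong refl)
  fix x assume "[k = k'] (mod N)"
  then have "N dvd (k' - k)" by (simp add: cong_iff_dvd_diff dvd_diff_commute)
  then have "N dvd (-(k*x) - -(k'*x))"
  proof -
    have "-(k*x) - -(k'*x) = (k'-k)*x" by (simp add: algebra_simps)
    then show ?thesis using \<open>N dvd (k' - k)\<close> by simp
  qed
  then show "f x * ee N (-(k*x)) = f x * ee N (-(k'*x))" using ee_dvd Nne by simp
qed

lemma FT_mod[simp]: "FT N f (k mod N) = FT N f k"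
  by (rule FT_cong) (simp add: cong_def)

lemma shift_sum:
  assumes cp: "coprime a N" and cond: "\<And>x. N dvd (-(k*x) - (c - d*(a*x+b)))"
  shows "(\<Sum>x\<in>{0..<N}. f ((a*x+b) mod N) * ee N (-(k*x))) = ee N c * FT N f d"
proof -
  define h where "h y = f (y mod N) * ee N (c - d*y)" for y
  have per: "h (y mod N) = h y" for y
  proof -
    have "N dvd ((c - d*(y mod N)) - (c - d*y))"
      by (simp add: dvd_minus_mod right_diff_distrib[symmetric])
    then show ?thesis unfolding h_def using ee_dvd[OF Nne] by simp
  qed
  have "(\<Sum>x\<in>{0..<N}. f ((a*x+b) mod N) * ee N (-(k*x))) = (\<Sum>x\<in>{0..<N}. h (a*x+b))"
    unfolding h_def using ee_dvd[OF Nne cond] by simp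
  also have "\<dots> = (\<Sum>x\<in>{0..<N}. h x)" by (rule reindex_aff[where h=h and N=N and a=a and b=b, OF Npos cp per])
  also have "\<dots> = (\<Sum>x\<in>{0..<N}. ee N c * (f x * ee N (-(d*x))))"
    unfolding h_def by (intro sum.cong refl) (simp add: ee_add[symmetric])
  also have "\<dots> = ee N c * FT N f d" by (simp add: FT_def sum_distrib_left)
  finally show ?thesis .
qed

lemma adj_expand: "adj_op N r rb f x = f ((r*x+r) mod N) + f ((r*x + -r) mod N) + f ((rb*x+1) mod N) + f ((rb*x + -1) mod N)"
proof -
  have e: "r*(x+1) = r*x+r" "r*(x-1) = r*x + -r" "rb*x - 1 = rb*x + -1"
    by (simp_all add: distrib_left right_diff_distrib)
  show ?thesis unfolding adj_op_def nbrs_def e by simp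
qed

lemma FT_adj:
  assumes eig: "\<forall>x\<in>{0..<N}. adj_op N r rb f x = lam * f x"
  shows "lam * FT N f k = bt N k * FT N f (rb*k) + bt N (r*k) * FT N f (r*k)"
proof -
  have dv: "N dvd a" if "a = (r*rb - 1) * z" for a z using dvdr that by simp
  have c1: "N dvd (-(k*x) - (k - (rb*k)*(r*x+r)))" for x
    by (rule dv[where z="k*(x+1)"]) (simp add: algebra_simps)
  have c2: "N dvd (-(k*x) - (-k - (rb*k)*(r*x + -r)))" for x
    by (rule dv[where z="k*(x-1)"]) (simp add: algebra_simps)
  have c3: "N dvd (-(k*x) - (r*k - (r*k)*(rb*x+1)))" for x
    by (rule dv[where z="k*x"]) (simp add: algebra_simps)
  have c4: "N dvd (-(k*x) - (-(r*k) - (r*k)*(rb*x + -1)))" for x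
    by (rule dv[where z="k*x"]) (simp add: algebra_simps)
  have s1: "(\<Sum>x\<in>{0..<N}. f ((r*x+r) mod N) * ee N (-(k*x))) = ee N k * FT N f (rb*k)"
    by (rule shift_sum[OF copr c1])
  have s2: "(\<Sum>x\<in>{0..<N}. f ((r*x + -r) mod N) * ee N (-(k*x))) = ee N (-k) * FT N f (rb*k)"
    by (rule shift_sum[OF copr c2])
  have s3: "(\<Sum>x\<in>{0..<N}. f ((rb*x+1) mod N) * ee N (-(k*x))) = ee N (r*k) * FT N f (r*k)"
    by (rule shift_sum[OF coprb c3])
  have s4: "(\<Sum>x\<in>{0..<N}. f ((rb*x + -1) mod N) * ee N (-(k*x))) = ee N (-(r*k)) * FT N f (r*k)"
    by (rule shift_sum[OF coprb c4])
  have "lam * FT N f k = (\<Sum>x\<in>{0..<N}. adj_op N r rb f x * ee N (-(k*x)))"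
    unfolding FT_def sum_distrib_left using eig by (intro sum.cong refl) (simp add: mult.assoc)
  also have "\<dots> = (\<Sum>x\<in>{0..<N}. f ((r*x+r) mod N) * ee N (-(k*x))) + (\<Sum>x\<in>{0..<N}. f ((r*x + -r) mod N) * ee N (-(k*x)))
     + (\<Sum>x\<in>{0..<N}. f ((rb*x+1) mod N) * ee N (-(k*x))) + (\<Sum>x\<in>{0..<N}. f ((rb*x + -1) mod N) * ee N (-(k*x)))"
    unfolding adj_expand by (simp add: sum.distrib distrib_right)
  also have "\<dots> = bt N k * FT N f (rb*k) + bt N (r*k) * FT N f (r*k)"
    unfolding s1 s2 s3 s4 bt_def by (simp add: distrib_right)
  finally show ?thesis .
qed

lemma FT_nonzero:
  assumes x0: "x0 \<in> {0..<N}" and nz: "f x0 \<noteq> 0"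
  shows "\<exists>k\<in>{0..<N}. FT N f k \<noteq> 0"
proof (rule ccontr)
  assume "\<not> ?thesis"
  then have z: "FT N f k = 0" if "k \<in> {0..<N}" for k using that by blast
  have inner: "(\<Sum>k\<in>{0..<N}. ee N (k*(x0 - y))) = (if y = x0 then of_int N else 0)" if y: "y \<in> {0..<N}" for y
  proof (cases "y = x0")
    case True then show ?thesis using Npos by simp
  next
    case False
    have "\<not> N dvd (x0 - y)"
    proof
      assume "N dvd (x0 - y)"
      then have "x0 mod N = y mod N" by (simp add: mod_eq_dvd_iff)
      then show False using x0 y False by simp
    qed
    then show ?thesis using geo_zero[OF Npos] False by simp
  qed
  have "0 = (\<Sum>k\<in>{0..<N}. FT N f k * ee N (k*x0))" using z by simp
  also have "\<dots> = (\<Sum>k\<in>{0..<N}. \<Sum>y\<in>{0..<N}. f y * ee N (k*(x0 - y)))"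
    unfolding FT_def sum_distrib_right
  proof (intro sum.cong refl)
    fix k y
    have "k*(x0-y) = -(k*y) + k*x0" by (simp add: algebra_simps)
    then show "f y * ee N (- (k * y)) * ee N (k * x0) = f y * ee N (k * (x0 - y))"
      by (simp only: ee_add mult.assoc)
  qed
  also have "\<dots> = (\<Sum>y\<in>{0..<N}. f y * (\<Sum>k\<in>{0..<N}. ee N (k*(x0 - y))))"
    by (subst sum.swap) (simp add: sum_distrib_left)
  also have "\<dots> = (\<Sum>y\<in>{0..<N}. if y = x0 then f y * of_int N else 0)"
    by (intro sum.cong refl) (simp add: inner)
  also have "\<dots> = f x0 * of_int N" using x0 by (simp add: sum.delta)
  finally show False using nz Npos by simp
qed


definition gam :: "int \<Rightarrow> real" where "gam k = 2 - cmod (bt N k)"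
definition g0 :: real where "g0 = 2 - 2 * cos (pi / (2 * r))"
definition LL :: nat where "LL = nat \<lfloor>log 2 (real_of_int N)\<rfloor>"

lemma g0_pos: "g0 > 0"
proof -
  have "0 < pi / (2 * r)" using r1 by simp
  moreover have "pi / (2*r) \<le> pi" using r1 by (simp add: field_simps)
  ultimately have "cos (pi / (2*r)) < cos 0" by (intro cos_monotone_0_pi) auto
  then show ?thesis by (simp add: g0_def)
qed

lemma g0_le2: "g0 \<le> 2"
proof -
  have a: "0 < pi / (2 * r)" using r1 by simp
  have "pi / (2 * r) \<le> pi / 2" using r1 by (intro divide_left_mono) auto
  then have "0 \<le> cos (pi / (2 * r))" using a by (intro cos_ge_zero) auto
  then show ?thesis by (simp add: g0_def)
qed

lemma abs_cos_shift: "\<bar>cos (x + pi * of_int q)\<bar> = \<bar>cos x\<bar>"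
proof (cases "q \<ge> 0")
  case True
  define n where "n = nat q"
  have "q = int n" using True by (simp add: n_def)
  then show ?thesis by (simp add: cos_add abs_mult)
next
  case False
  define n where "n = nat (-q)"
  have "q = - int n" using False by (simp add: n_def)
  then show ?thesis by (simp add: cos_diff abs_mult)
qed

lemma gam_eq: "gam k = 2 - 2 * \<bar>cos (2 * pi * of_int k / of_int N)\<bar>"
  by (simp add: gam_def norm_bt)

lemma good:
  assumes nf: "\<not> [r*k = k] (mod N)"
  shows "\<exists>j<LL. g0 \<le> gam (r^j*k)"
proof -
  have n2: "\<not> N dvd 2*k"
  proof
    assume d2: "N dvd 2*k"
    show False
    proof (cases "even r")
      case True
      then obtain m where "r = 2*m" by blast
      then have "coprime N 2" using cop by simp
      then have "N dvd k" using d2 by (simp add: coprime_dvd_mult_right_iff)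
      then have "N dvd (r*k - k)" by simp
      then show False using nf by (simp add: cong_iff_dvd_diff)
    next
      case False
      then obtain m where "r - 1 = 2*m" by (metis odd_two_times_div_two_succ add_diff_cancel_right')
      then have "r*k - k = m*(2*k)" by (simp add: algebra_simps)
      then have "N dvd (r*k - k)" using d2 by simp
      then show False using nf by (simp add: cong_iff_dvd_diff)
    qed
  qed
  define u where "u = (2*k) mod N"
  have u00: "u \<noteq> 0" using n2 unfolding u_def by (simp add: dvd_eq_mod_eq_0)
  have u01: "0 \<le> u" "u < N" using Npos unfolding u_def by simp_all
  have u0: "0 < u" "u < N" using u00 u01 by simp_all
  have du: "N dvd (2*k - u)" unfolding u_def by (simp add: dvd_minus_mod)
  define v where "v = (if 2*u \<le> N then u else u - N)"
  have v0: "v \<noteq> 0" "2*\<bar>v\<bar> \<le> N" using u0 by (auto simp: v_def)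
  have dv: "N dvd (2*k - v)"
  proof (cases "2*u \<le> N")
    case True then show ?thesis using du by (simp add: v_def)
  next
    case False
    have e: "2*k - v = (2*k - u) + N" using False by (simp add: v_def)
    have "N dvd (2*k - u) + N" using du by simp
    then show ?thesis unfolding e .
  qed
  define P where "P j \<longleftrightarrow> N < 2 * r^(Suc j) * \<bar>v\<bar>" for j
  have ex: "P (nat N)"
  proof -
    have "nat N < 2 ^ nat N" by (rule less_exp)
    then have "int (nat N) < int (2 ^ nat N)" by (simp only: of_nat_less_iff)
    then have "N < 2 ^ nat N" using Npos by simp
    also have "\<dots> \<le> 2 ^ (Suc (nat N))" by simp
    finally have "N < 2 ^ (Suc (nat N))" .
    also have "\<dots> \<le> r ^ (Suc (nat N))" using r1 by (intro power_mono) auto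
    also have "\<dots> \<le> 2 * r^(Suc (nat N)) * \<bar>v\<bar>" using v0 r1 by (simp add: mult_le_cancel_left1)
    finally show ?thesis by (simp add: P_def)
  qed
  define j where "j = (LEAST j. P j)"
  have Pj: "P j" unfolding j_def by (rule LeastI[where P=P, OF ex])
  have nPj: "2 * r^j * \<bar>v\<bar> \<le> N"
  proof (cases j)
    case 0 then show ?thesis using v0 by simp
  next
    case (Suc j')
    then have "j' < j" by simp
    then have "\<not> P j'" unfolding j_def by (rule not_less_Least)
    then show ?thesis using Suc by (simp add: P_def)
  qed
  define w where "w = r^j * v"
  have aw: "\<bar>w\<bar> = r^j * \<bar>v\<bar>" using r1 by (simp add: w_def abs_mult)
  have w1: "2 * \<bar>w\<bar> \<le> N" using nPj aw by (simp add: mult.assoc)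
  have w2: "N < 2 * r * \<bar>w\<bar>" using Pj aw by (simp add: P_def mult_ac)
  have dw: "N dvd (2*(r^j*k) - w)"
  proof -
    have "2*(r^j*k) - w = r^j * (2*k - v)" by (simp add: w_def algebra_simps)
    then show ?thesis using dv by simp
  qed
  have jL: "j < LL"
  proof -
    have "2^j \<le> r^j" using r1 by (intro power_mono) auto
    moreover have "r^j \<le> r^j * \<bar>v\<bar>" using v0 r1 by (simp add: mult_le_cancel_left1)
    ultimately have "2 * 2^j \<le> 2 * r^j * \<bar>v\<bar>" by simp
    then have "(2::int)^(Suc j) \<le> N" using nPj by simp
    then have "real_of_int (2^(Suc j)) \<le> real_of_int N" by linarith
    then have "(2::real)^(Suc j) \<le> real_of_int N" by simp
    then have "log 2 ((2::real)^(Suc j)) \<le> log 2 (real_of_int N)" using Npos by (subst log_le_cancel_iff) auto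
    moreover have "log 2 ((2::real)^(Suc j)) = real (Suc j)" by (rule log_pow_cancel) auto
    ultimately have "real (Suc j) \<le> log 2 (real_of_int N)" by simp
    then have "int (Suc j) \<le> \<lfloor>log 2 (real_of_int N)\<rfloor>" by (simp add: le_floor_iff)
    then show ?thesis unfolding LL_def by linarith
  qed
  obtain q where q: "2*(r^j*k) - w = N * q" using dw by (elim dvdE)
  have ang: "2 * pi * of_int (r^j*k) / of_int N = pi * of_int w / of_int N + pi * of_int q"
  proof -
    have "2*(r^j*k) = w + N * q" using q by simp
    then have "real_of_int (2*(r^j*k)) = real_of_int (w + N * q)" by (simp only:)
    then have "2 * real_of_int (r^j*k) = of_int w + of_int N * of_int q" by simp
    then show ?thesis using Nne by (simp add: field_simps)
  qed
  have Nr: "(0::real) < of_int N" using Npos by simp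
  have w1r: "2 * \<bar>real_of_int w\<bar> \<le> of_int N"
  proof -
    have "real_of_int (2 * \<bar>w\<bar>) \<le> of_int N" using w1 by (simp only: of_int_le_iff)
    then show ?thesis by simp
  qed
  have w2r: "of_int N < 2 * real_of_int r * \<bar>real_of_int w\<bar>"
  proof -
    have "real_of_int N < of_int (2 * r * \<bar>w\<bar>)" using w2 by (simp only: of_int_less_iff)
    then show ?thesis by simp
  qed
  have absang: "\<bar>pi * of_int w / of_int N\<bar> = pi * \<bar>of_int w\<bar> / of_int N"
    using Nr by (simp add: abs_mult abs_divide)
  have up: "pi * \<bar>of_int w\<bar> / of_int N \<le> pi / 2"
  proof -
    have "pi * (2 * \<bar>real_of_int w\<bar>) \<le> pi * of_int N" using w1r by (intro mult_left_mono) auto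
    then show ?thesis using Nr by (simp add: field_simps)
  qed
  have lo: "pi / (2*r) \<le> pi * \<bar>of_int w\<bar> / of_int N"
  proof -
    have "pi * of_int N \<le> pi * (2 * real_of_int r * \<bar>real_of_int w\<bar>)" using w2r by (intro mult_left_mono) auto
    then show ?thesis using Nr r1 by (simp add: field_simps)
  qed
  have nn: "0 \<le> pi * \<bar>of_int w\<bar> / of_int N" using Nr by simp
  have "\<bar>cos (2 * pi * of_int (r^j*k) / of_int N)\<bar> = \<bar>cos (pi * of_int w / of_int N)\<bar>"
    unfolding ang by (rule abs_cos_shift)
  also have "\<dots> = \<bar>cos (pi * \<bar>of_int w\<bar> / of_int N)\<bar>"
    by (simp only: absang[symmetric] cos_abs_real)
  also have "\<dots> = cos (pi * \<bar>of_int w\<bar> / of_int N)"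
    using up nn by (intro abs_of_nonneg cos_ge_zero) auto
  also have "\<dots> \<le> cos (pi / (2*r))"
  proof (rule cos_monotone_0_pi_le)
    show "0 \<le> pi / (2*r)" using r1 by simp
    show "pi / (2*r) \<le> pi * \<bar>of_int w\<bar> / of_int N" by (rule lo)
    show "pi * \<bar>of_int w\<bar> / of_int N \<le> pi" using up pi_gt_zero by linarith
  qed
  finally have "g0 \<le> gam (r^j*k)" by (simp add: gam_eq g0_def)
  then show ?thesis using jL by blast
qed


lemma bt_mod: "bt N (k mod N) = bt N k"
proof -
  have e: "-(k mod N) - -k = k - k mod N" by simp
  have "ee N (-(k mod N)) = ee N (-k)" by (rule ee_dvd[OF Nne]) (simp only: e dvd_minus_mod)
  then show ?thesis using ee_mod[OF Nne, of k] by (simp add: bt_def)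
qed

lemma gam_mod: "gam (k mod N) = gam k" by (simp add: gam_def bt_mod)

lemma gam_bounds: "0 \<le> gam k" "gam k \<le> 2"
  by (simp_all add: gam_eq)

lemma cong_rbr: "[rb*(r*k) = k] (mod N)"
proof -
  have "rb*(r*k) - k = (r*rb - 1)*k" by (simp add: algebra_simps)
  then show ?thesis using dvdr by (simp add: cong_iff_dvd_diff)
qed

lemma quant:
  fixes F :: "int \<Rightarrow> complex" and lam :: complex
  assumes perF: "\<And>k. F (k mod N) = F k"
    and eq: "\<And>k. lam * F k = bt N k * F (rb*k) + bt N (r*k) * F (r*k)"
    and zf: "\<And>k. [r*k = k] (mod N) \<Longrightarrow> F k = 0"
    and nz: "\<exists>k\<in>{0..<N}. F k \<noteq> 0"
  shows "LL \<ge> 1 \<and> g0^2 / 64 / (real LL)^2 \<le> 4 - cmod lam"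
proof -
  define a where "a k = cmod (F k)" for k
  have pera: "a (k mod N) = a k" for k by (simp add: a_def perF)
  have a_cong: "a x = a y" if "[x = y] (mod N)" for x y
  proof -
    have "a x = a (x mod N)" by (simp add: pera)
    also have "\<dots> = a (y mod N)" using that unfolding cong_def by simp
    finally show ?thesis by (simp add: pera)
  qed
  have a0: "a k \<ge> 0" for k by (simp add: a_def)
  have arb: "a (rb*(r*k)) = a k" for k by (rule a_cong[OF cong_rbr])
  define S where "S = (\<Sum>k\<in>{0..<N}. (a k)^2)"
  define D where "D = (\<Sum>k\<in>{0..<N}. (a k - a (r*k))^2)"
  define P where "P = (\<Sum>k\<in>{0..<N}. gam (r*k) * a k * a (r*k))"
  define E where "E = (\<Sum>k\<in>{0..<N}. gam k * (a k)^2)"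
  define Q where "Q = (\<Sum>k\<in>{0..<N}. a k * a (r*k))"
  have Spos: "S > 0"
  proof -
    obtain k0 where k0: "k0 \<in> {0..<N}" "F k0 \<noteq> 0" using nz by blast
    have "0 < (a k0)^2" using k0 by (simp add: a_def)
    then show ?thesis unfolding S_def by (intro sum_pos2[OF _ k0(1)]) auto
  qed
  have Sr: "(\<Sum>k\<in>{0..<N}. (a (r*k))^2) = S" unfolding S_def
    by (rule reindex_mul[where h="\<lambda>k. (a k)^2", OF Npos copr]) (simp add: pera)
  have Er: "(\<Sum>k\<in>{0..<N}. gam (r*k) * (a (r*k))^2) = E" unfolding E_def
    by (rule reindex_mul[where h="\<lambda>k. gam k * (a k)^2", OF Npos copr]) (simp add: pera gam_mod)
  have D0: "D \<ge> 0" unfolding D_def by (intro sum_nonneg) auto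
  have P0: "P \<ge> 0" unfolding P_def using gam_bounds a0 by (intro sum_nonneg) auto
  have stepA: "cmod lam * S \<le> 2 * (\<Sum>k\<in>{0..<N}. cmod (bt N (r*k)) * a k * a (r*k))"
  proof -
    have cc: "cnj z * (lam * z) = lam * complex_of_real ((cmod z)^2)" for z
      using complex_norm_square[of z] by (simp add: mult.commute mult.left_commute)
    have "lam * of_real S = (\<Sum>k\<in>{0..<N}. cnj (F k) * (lam * F k))"
      unfolding S_def a_def of_real_sum sum_distrib_left cc ..
    also have "\<dots> = (\<Sum>k\<in>{0..<N}. cnj (F k) * (bt N k * F (rb*k) + bt N (r*k) * F (r*k)))"
      by (simp add: eq)
    finally have e: "lam * of_real S = \<dots>" .
    have "cmod lam * S = cmod (lam * of_real S)" using Spos by (simp add: norm_mult)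
    also have "\<dots> \<le> (\<Sum>k\<in>{0..<N}. cmod (cnj (F k) * (bt N k * F (rb*k) + bt N (r*k) * F (r*k))))"
      unfolding e by (rule norm_sum)
    also have "\<dots> \<le> (\<Sum>k\<in>{0..<N}. cmod (bt N k) * a k * a (rb*k) + cmod (bt N (r*k)) * a k * a (r*k))"
    proof (intro sum_mono)
      fix k
      have "cmod (cnj (F k) * (bt N k * F (rb*k) + bt N (r*k) * F (r*k)))
          = a k * cmod (bt N k * F (rb*k) + bt N (r*k) * F (r*k))" by (simp add: a_def norm_mult)
      also have "\<dots> \<le> a k * (cmod (bt N k) * a (rb*k) + cmod (bt N (r*k)) * a (r*k))"
        using a0 by (intro mult_left_mono) (auto simp: a_def norm_mult intro: norm_triangle_le)
      finally show "cmod (cnj (F k) * (bt N k * F (rb*k) + bt N (r*k) * F (r*k)))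
          \<le> cmod (bt N k) * a k * a (rb*k) + cmod (bt N (r*k)) * a k * a (r*k)"
        by (simp add: algebra_simps)
    qed
    also have "\<dots> = (\<Sum>k\<in>{0..<N}. cmod (bt N k) * a k * a (rb*k)) + (\<Sum>k\<in>{0..<N}. cmod (bt N (r*k)) * a k * a (r*k))"
      by (rule sum.distrib)
    also have "(\<Sum>k\<in>{0..<N}. cmod (bt N k) * a k * a (rb*k)) = (\<Sum>k\<in>{0..<N}. cmod (bt N (r*k)) * a (r*k) * a (rb*(r*k)))"
    proof (rule reindex_mul[where h="\<lambda>k. cmod (bt N k) * a k * a (rb*k)", OF Npos copr, symmetric])
      fix x
      have "a (rb * (x mod N)) = a (rb*x)" by (rule a_cong) (simp add: cong_def mod_mult_right_eq)
      then show "cmod (bt N (x mod N)) * a (x mod N) * a (rb * (x mod N)) = cmod (bt N x) * a x * a (rb * x)"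
        by (simp add: bt_mod pera)
    qed
    also have "\<dots> = (\<Sum>k\<in>{0..<N}. cmod (bt N (r*k)) * a k * a (r*k))"
      by (intro sum.cong refl) (simp only: arb, simp add: mult_ac)
    finally show ?thesis by simp
  qed
  have Dexp: "D = 2*S - 2*Q"
  proof -
    have "D = (\<Sum>k\<in>{0..<N}. (a k)^2 + (a (r*k))^2 - 2*(a k * a (r*k)))"
      unfolding D_def by (intro sum.cong refl) (simp add: power2_diff)
    also have "\<dots> = (\<Sum>k\<in>{0..<N}. (a k)^2) + (\<Sum>k\<in>{0..<N}. (a (r*k))^2) - 2*Q"
      unfolding Q_def by (simp add: sum.distrib sum_subtractf sum_distrib_left)
    finally show ?thesis unfolding Sr by (simp add: S_def)
  qed
  have Xexp: "(\<Sum>k\<in>{0..<N}. cmod (bt N (r*k)) * a k * a (r*k)) = 2*Q - P"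
  proof -
    have "(\<Sum>k\<in>{0..<N}. cmod (bt N (r*k)) * a k * a (r*k)) = (\<Sum>k\<in>{0..<N}. 2*(a k * a (r*k)) - gam (r*k) * a k * a (r*k))"
      by (intro sum.cong refl) (simp add: gam_def algebra_simps)
    also have "\<dots> = 2*Q - P" unfolding Q_def P_def by (simp add: sum_subtractf sum_distrib_left)
    finally show ?thesis .
  qed
  have stepB: "2*D + 2*P \<le> (4 - cmod lam) * S"
    using stepA Dexp Xexp by (simp add: algebra_simps)
  have stepC: "E \<le> P + t*S + D/t" if t: "t > 0" for t
  proof -
    have "E = (\<Sum>k\<in>{0..<N}. gam (r*k) * (a (r*k))^2)" by (rule Er[symmetric])
    also have "\<dots> \<le> (\<Sum>k\<in>{0..<N}. gam (r*k) * a k * a (r*k) + t * (a (r*k))^2 + (a (r*k) - a k)^2 / t)"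
      by (intro sum_mono pw_ineq gam_bounds a0 t)
    also have "\<dots> = P + t*S + D/t"
    proof -
      have "(\<Sum>k\<in>{0..<N}. (a (r*k) - a k)^2 / t) = D/t"
        unfolding D_def sum_divide_distrib by (intro sum.cong refl) (simp add: power2_commute)
      then show ?thesis unfolding P_def Sr[symmetric]
        by (simp add: sum.distrib sum_distrib_left)
    qed
    finally show ?thesis .
  qed
  have pt: "(a k)^2 \<le> (2/g0) * (\<Sum>i<LL. gam (r^i*k) * (a (r^i*k))^2) + 2 * real LL * (\<Sum>i<LL. (a (r^i*k) - a (r^Suc i*k))^2)" for k
  proof -
    define G where "G = (\<Sum>i<LL. gam (r^i*k) * (a (r^i*k))^2)"
    define T where "T = (\<Sum>i<LL. (a (r^i*k) - a (r^Suc i*k))^2)"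
    have G0: "G \<ge> 0" unfolding G_def using gam_bounds by (intro sum_nonneg) auto
    have T0: "T \<ge> 0" unfolding T_def by (intro sum_nonneg) auto
    have "(a k)^2 \<le> (2/g0) * G + 2 * real LL * T"
    proof (cases "[r*k = k] (mod N)")
      case True
      then have "a k = 0" by (simp add: a_def zf)
      then show ?thesis using G0 T0 g0_pos by simp
    next
      case False
      obtain j where j: "j < LL" "g0 \<le> gam (r^j*k)" using good[OF False] by blast
      define y where "y = a (r^j*k)"
      have h2: "gam (r^j*k) * y^2 \<le> G" unfolding G_def y_def
        by (rule member_le_sum[where f="\<lambda>i. gam (r^i*k) * (a (r^i*k))^2"]) (use j gam_bounds in auto)
      have "g0 * y^2 \<le> gam (r^j*k) * y^2" using j by (intro mult_right_mono) auto
      then have "g0 * y^2 \<le> G" using h2 by linarith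
      then have h1: "y^2 \<le> G / g0" using g0_pos by (simp add: pos_le_divide_eq mult.commute)
      have h3: "a k - y = (\<Sum>i<j. a (r^i*k) - a (r^Suc i*k))"
        using sum_lessThan_telescope'[of "\<lambda>i. a (r^i*k)" j] by (simp add: y_def)
      have h4: "(a k - y)^2 \<le> (\<Sum>i<j. (a (r^i*k) - a (r^Suc i*k))^2) * real j"
        using sum_squared_le_sum_of_squares[of "\<lambda>i. a (r^i*k) - a (r^Suc i*k)" "{..<j}"] h3 by simp
      have h5: "(\<Sum>i<j. (a (r^i*k) - a (r^Suc i*k))^2) \<le> T" unfolding T_def
        by (rule sum_mono2) (use j in auto)
      have h6: "(\<Sum>i<j. (a (r^i*k) - a (r^Suc i*k))^2) * real j \<le> T * real LL"
        using h5 j T0 by (intro mult_mono) auto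
      have "(a k)^2 \<le> 2*y^2 + 2*(a k - y)^2" by (rule sq2_ineq)
      also have "\<dots> \<le> 2*(G/g0) + 2*(T * real LL)" using h1 h4 h6 by linarith
      finally show ?thesis by (simp add: mult_ac)
    qed
    then show ?thesis unfolding G_def T_def .
  qed
  have sumG: "(\<Sum>k\<in>{0..<N}. \<Sum>i<LL. gam (r^i*k) * (a (r^i*k))^2) = real LL * E"
  proof -
    have inner: "(\<Sum>k\<in>{0..<N}. gam (r^i*k) * (a (r^i*k))^2) = E" for i
      unfolding E_def
      by (rule reindex_mul[where h="\<lambda>k. gam k * (a k)^2", OF Npos]) (simp_all add: copr pera gam_mod)
    show ?thesis by (subst sum.swap) (simp add: inner)
  qed
  have sumT: "(\<Sum>k\<in>{0..<N}. \<Sum>i<LL. (a (r^i*k) - a (r^Suc i*k))^2) = real LL * D"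
  proof -
    have inner: "(\<Sum>k\<in>{0..<N}. (a (r^i*k) - a (r*(r^i*k)))^2) = D" for i
      unfolding D_def
    proof (rule reindex_mul[where h="\<lambda>k. (a k - a (r*k))^2", OF Npos])
      show "coprime (r^i) N" by (simp add: copr)
      fix x
      have "a (r * (x mod N)) = a (r*x)" by (rule a_cong) (simp add: cong_def mod_mult_right_eq)
      then show "(a (x mod N) - a (r * (x mod N)))^2 = (a x - a (r*x))^2" by (simp add: pera)
    qed
    have e: "r^Suc i*k = r*(r^i*k)" for i k by (simp add: mult.assoc)
    have inner': "(\<Sum>k\<in>{0..<N}. (a (r^i*k) - a (r^Suc i*k))^2) = D" for i
      unfolding e by (rule inner)
    show ?thesis by (subst sum.swap) (simp only: inner', simp)
  qed
  have stepD: "S \<le> (2/g0) * (real LL * E) + 2 * real LL * (real LL * D)"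
  proof -
    have "S \<le> (\<Sum>k\<in>{0..<N}. (2/g0) * (\<Sum>i<LL. gam (r^i*k) * (a (r^i*k))^2) + 2 * real LL * (\<Sum>i<LL. (a (r^i*k) - a (r^Suc i*k))^2))"
      unfolding S_def by (intro sum_mono pt)
    also have "\<dots> = (2/g0) * (\<Sum>k\<in>{0..<N}. \<Sum>i<LL. gam (r^i*k) * (a (r^i*k))^2) + 2 * real LL * (\<Sum>k\<in>{0..<N}. \<Sum>i<LL. (a (r^i*k) - a (r^Suc i*k))^2)"
      by (simp add: sum.distrib sum_distrib_left)
    finally show ?thesis unfolding sumG sumT .
  qed
  have LL1: "LL \<ge> 1"
  proof (rule ccontr)
    assume "\<not> LL \<ge> 1"
    then have "LL = 0" by simp
    then show False using stepD Spos by simp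
  qed
  have M1: "real LL \<ge> 1" using LL1 by simp
  have Dd: "S \<le> (2/g0)*real LL*E + 2*real LL*real LL*D" using stepD by (simp add: mult_ac)
  have "g0^2/64/(real LL)^2 \<le> 4 - cmod lam"
    by (rule final_arith[OF Spos M1 g0_pos g0_le2 D0 P0 _ stepC Dd])
      (use stepB in \<open>simp add: mult_ac\<close>, use g0_pos M1 in simp)
  then show ?thesis using LL1 by simp
qed


lemma bt_cong: "[x = y] (mod N) \<Longrightarrow> bt N x = bt N y"
  by (metis bt_mod cong_def)

lemma LL_bound: "real LL \<le> 2 * ln (real_of_int N)"
proof -
  have N2: "(2::real) \<le> of_int N" using N1 by simp
  have lg: "1 \<le> log 2 (real_of_int N)" using N2 by (simp add: le_log_iff)
  have "real LL = of_int \<lfloor>log 2 (real_of_int N)\<rfloor>" unfolding LL_def using lg by simp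
  also have "\<dots> \<le> log 2 (real_of_int N)" by simp
  also have "\<dots> = ln (real_of_int N) / ln 2" by (simp add: log_def)
  also have "\<dots> \<le> 2 * ln (real_of_int N)"
  proof -
    have l0: "0 \<le> ln (real_of_int N)" using N2 by simp
    have "1 \<le> 2 * ln (2::real)" using ln2_ge_two_thirds by simp
    then have "ln (real_of_int N) * 1 \<le> ln (real_of_int N) * (2 * ln 2)" using l0 by (intro mult_left_mono)
    then have "ln (real_of_int N) \<le> 2 * ln (real_of_int N) * ln 2" by (simp add: mult_ac)
    then show ?thesis by (simp add: divide_le_eq)
  qed
  finally show ?thesis .
qed

lemma main_eig:
  assumes "is_eigenvalue N r rb lam"
  shows "(\<exists>k. [r*k = k] (mod N) \<and> lam = complex_of_real (4 * cos (2 * pi * of_int k / of_int N)))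
         \<or> cmod lam \<le> 4 - (g0^2/256) / (ln (real_of_int N))^2"
proof -
  obtain f where nzf: "\<exists>x\<in>{0..<N}. f x \<noteq> 0" and eig: "\<forall>x\<in>{0..<N}. adj_op N r rb f x = lam * f x"
    using assms unfolding is_eigenvalue_def by blast
  define F where "F = FT N f"
  have perF: "F (k mod N) = F k" for k by (simp add: F_def)
  have eqF: "lam * F k = bt N k * F (rb*k) + bt N (r*k) * F (r*k)" for k
    unfolding F_def by (rule FT_adj[OF eig])
  have nzF: "\<exists>k\<in>{0..<N}. F k \<noteq> 0" unfolding F_def using nzf FT_nonzero by blast
  show ?thesis
  proof (cases "\<exists>k. [r*k = k] (mod N) \<and> F k \<noteq> 0")
    case True
    then obtain k where k: "[r*k = k] (mod N)" "F k \<noteq> 0" by blast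
    have c1: "F (r*k) = F k" unfolding F_def by (rule FT_cong[OF k(1)])
    have "[rb*(r*k) = rb*k] (mod N)" by (rule cong_scalar_left[OF k(1)])
    then have "[rb*k = k] (mod N)" using cong_rbr by (metis cong_sym cong_trans)
    then have c2: "F (rb*k) = F k" unfolding F_def by (rule FT_cong)
    have c3: "bt N (r*k) = bt N k" by (rule bt_cong[OF k(1)])
    have "lam * F k = (2 * bt N k) * F k" using eqF[of k] c1 c2 c3 by (simp add: algebra_simps)
    then have "lam = 2 * bt N k" using k(2) by simp
    then have "lam = complex_of_real (4 * cos (2 * pi * of_int k / of_int N))" by (simp add: bt_real)
    then show ?thesis using k(1) by blast
  next
    case False
    have zf: "F k = 0" if "[r*k = k] (mod N)" for k using False that by blast
    have q: "LL \<ge> 1 \<and> g0^2 / 64 / (real LL)^2 \<le> 4 - cmod lam"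
      by (rule quant[OF perF eqF zf nzF])
    have L0: "0 < real LL" using q by simp
    have "(real LL)^2 \<le> (2 * ln (real_of_int N))^2" using LL_bound L0 by (intro power_mono) auto
    then have "(real LL)^2 \<le> 4 * (ln (real_of_int N))^2" by (simp add: power_mult_distrib)
    then have "g0^2 / 64 / (4 * (ln (real_of_int N))^2) \<le> g0^2 / 64 / (real LL)^2"
    proof -
      have "0 < ln (real_of_int N)" using N1 by simp
      then show ?thesis using L0 \<open>(real LL)^2 \<le> 4 * (ln (real_of_int N))^2\<close> by (intro divide_left_mono) auto
    qed
    then have "(g0^2/256) / (ln (real_of_int N))^2 \<le> 4 - cmod lam" using q by simp
    then show ?thesis by simp
  qed
qed

end


lemma even_mod_int: "even (N::int) \<Longrightarrow> even (a mod N) = even a"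
proof -
  assume "even N"
  have "a mod N = a - (a div N) * N" by (simp add: minus_div_mult_eq_mod)
  then show ?thesis using \<open>even N\<close> by simp
qed

theorem theorem4:
  fixes r :: int
  assumes "r > 1"
  shows "\<exists>c>0. \<forall>N rb :: int. N > 1 \<longrightarrow> coprime N r \<longrightarrow> [r * rb = 1] (mod N) \<longrightarrow>
           (\<forall>lam. is_nontrivial_eigenvalue N r rb lam \<longrightarrow>
              cmod lam \<le> 4 - c / (ln (real_of_int N))^2 \<or>
              (\<exists>k::int. [r * k = k] (mod N) \<and>
                 lam = complex_of_real (4 * cos (2 * pi * real_of_int k / real_of_int N))))
         \<and> ((\<exists>m::nat. N = 2 ^ m) \<and> gcd (r - 1) N = 2 \<longrightarrow>
              is_bipartite N r rb \<and>
              (\<forall>lam. is_eigenvalue N r rb lam \<longrightarrow> lam \<noteq> 4 \<longrightarrow> lam \<noteq> -4 \<longrightarrow>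
                 cmod lam \<le> 4 - c / (ln (real_of_int N))^2))"
proof -
  define c where "c = (2 - 2 * cos (pi / (2 * r)))^2 / 256"
  have cpos: "c > 0"
  proof -
    have "0 < pi / (2 * r)" using assms by simp
    moreover have "pi / (2*r) \<le> pi" using assms by (simp add: field_simps)
    ultimately have "cos (pi / (2*r)) < cos 0" by (intro cos_monotone_0_pi) auto
    then show ?thesis by (simp add: c_def)
  qed
  have "\<forall>N rb :: int. N > 1 \<longrightarrow> coprime N r \<longrightarrow> [r * rb = 1] (mod N) \<longrightarrow>
           (\<forall>lam. is_nontrivial_eigenvalue N r rb lam \<longrightarrow>
              cmod lam \<le> 4 - c / (ln (real_of_int N))^2 \<or>
              (\<exists>k::int. [r * k = k] (mod N) \<and>
                 lam = complex_of_real (4 * cos (2 * pi * real_of_int k / real_of_int N))))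
         \<and> ((\<exists>m::nat. N = 2 ^ m) \<and> gcd (r - 1) N = 2 \<longrightarrow>
              is_bipartite N r rb \<and>
              (\<forall>lam. is_eigenvalue N r rb lam \<longrightarrow> lam \<noteq> 4 \<longrightarrow> lam \<noteq> -4 \<longrightarrow>
                 cmod lam \<le> 4 - c / (ln (real_of_int N))^2))"
  proof (intro allI impI)
    fix N rb :: int
    assume N1: "N > 1" and cp: "coprime N r" and iv: "[r*rb = 1] (mod N)"
    interpret G N r rb by unfold_locales (use N1 cp iv assms in auto)
    have g0c: "g0^2/256 = c" by (simp add: g0_def c_def)
    have me: "(\<exists>k. [r*k = k] (mod N) \<and> lam = complex_of_real (4 * cos (2 * pi * of_int k / of_int N)))
         \<or> cmod lam \<le> 4 - c / (ln (real_of_int N))^2" if "is_eigenvalue N r rb lam" for lam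
      using main_eig[OF that] g0c by simp
    show "(\<forall>lam. is_nontrivial_eigenvalue N r rb lam \<longrightarrow>
              cmod lam \<le> 4 - c / (ln (real_of_int N))^2 \<or>
              (\<exists>k::int. [r * k = k] (mod N) \<and>
                 lam = complex_of_real (4 * cos (2 * pi * real_of_int k / real_of_int N))))
         \<and> ((\<exists>m::nat. N = 2 ^ m) \<and> gcd (r - 1) N = 2 \<longrightarrow>
              is_bipartite N r rb \<and>
              (\<forall>lam. is_eigenvalue N r rb lam \<longrightarrow> lam \<noteq> 4 \<longrightarrow> lam \<noteq> -4 \<longrightarrow>
                 cmod lam \<le> 4 - c / (ln (real_of_int N))^2))"
    proof (intro conjI allI impI)
      fix lam assume "is_nontrivial_eigenvalue N r rb lam"
      then have "is_eigenvalue N r rb lam" unfolding is_nontrivial_eigenvalue_def is_eigenvalue_def by blast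
      then show "cmod lam \<le> 4 - c / (ln (real_of_int N))^2 \<or>
              (\<exists>k::int. [r * k = k] (mod N) \<and>
                 lam = complex_of_real (4 * cos (2 * pi * real_of_int k / real_of_int N)))"
        using me by blast
    next
      assume H: "(\<exists>m::nat. N = 2 ^ m) \<and> gcd (r - 1) N = 2"
      then obtain m :: nat where Nm: "N = 2^m" and gd: "gcd (r - 1) N = 2" by blast
      have "m \<noteq> 0" using Nm N1 by (metis less_irrefl power_0)
      then obtain n where mn: "m = Suc n" by (cases m) auto
      have evN: "even N" using Nm mn by simp
      have "2 dvd (r - 1)" using gd by (metis gcd_dvd1)
      then have oddr: "odd r" by simp
      have oddrb: "odd rb"
      proof
        assume "even rb"
        then have "odd (r*rb - 1)" by simp
        moreover have "2 dvd (r*rb - 1)" using dvdr evN by (meson dvd_trans)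
        ultimately show False by simp
      qed
      have par: "even (a mod N) = even a" for a by (rule even_mod_int[OF evN])
      show "is_bipartite N r rb"
        unfolding is_bipartite_def
      proof (intro exI[of _ "{x\<in>{0..<N}. even x}"] conjI ballI)
        show "{x\<in>{0..<N}. even x} \<subseteq> {0..<N}" by auto
        fix x y assume x: "x \<in> {0..<N}" and y: "y \<in> set (nbrs N r rb x)"
        have yr: "y \<in> {0..<N}" using y Npos by (auto simp: nbrs_def)
        have "even y \<longleftrightarrow> odd x" using y oddr oddrb by (auto simp: nbrs_def par)
        then show "(x \<in> {x\<in>{0..<N}. even x}) = (y \<notin> {x\<in>{0..<N}. even x})" using x yr by auto
      qed
    next
      fix lam assume H: "(\<exists>m::nat. N = 2 ^ m) \<and> gcd (r - 1) N = 2"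
        and ev: "is_eigenvalue N r rb lam" and n4: "lam \<noteq> 4" and nm4: "lam \<noteq> -4"
      then obtain m :: nat where Nm: "N = 2^m" and gd: "gcd (r - 1) N = 2" by blast
      have "m \<noteq> 0" using Nm N1 by (metis less_irrefl power_0)
      then obtain n where mn: "m = Suc n" by (cases m) auto
      have "2 dvd (r - 1)" using gd by (metis gcd_dvd1)
      then obtain w where s: "r - 1 = 2*w" by blast
      have "2 * gcd w (2^n) = gcd (2*w) (2*2^n)" using gcd_mult_distrib_int[of 2 w "2^n"] by simp
      also have "\<dots> = 2" using gd s Nm mn by simp
      finally have "gcd w (2^n) = 1" by simp
      then have cps: "coprime (2^n) w" by (simp add: coprime_iff_gcd_eq_1 gcd.commute)
      show "cmod lam \<le> 4 - c / (ln (real_of_int N))^2"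
      proof (cases "cmod lam \<le> 4 - c / (ln (real_of_int N))^2")
        case True then show ?thesis .
      next
        case False
        then obtain k where k: "[r*k = k] (mod N)"
          and lk: "lam = complex_of_real (4 * cos (2 * pi * of_int k / of_int N))"
          using me[OF ev] by blast
        have "N dvd (r*k - k)" using k by (simp add: cong_iff_dvd_diff)
        moreover have "r*k - k = 2*(w*k)" using s by (simp add: algebra_simps)
        ultimately have "2*2^n dvd 2*(w*k)" using Nm mn by simp
        then have "2^n dvd w*k" by (simp add: dvd_mult_cancel_left)
        then have "2^n dvd k" using cps by (simp add: coprime_dvd_mult_right_iff)
        then obtain q where q: "k = 2^n * q" by blast
        have "2 * pi * of_int k / of_int N = 0 + pi * of_int q"
          using q Nm mn by (simp add: field_simps)
        then have "\<bar>cos (2 * pi * of_int k / of_int N)\<bar> = 1"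
          using abs_cos_shift[of 0 q] by simp
        then have "cos (2 * pi * of_int k / of_int N) = 1 \<or> cos (2 * pi * of_int k / of_int N) = -1"
          by linarith
        then have "lam = 4 \<or> lam = -4" using lk by auto
        then show ?thesis using n4 nm4 by blast
      qed
    qed
  qed
  then show ?thesis using cpos by blast
qed

end
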